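(* Let $m\ge 1$. In the checker game on $2m+1$ positions, the configuration $b^mOw^m$ can be transformed, by a sequence of exactly $\frac{m(m+1)}{2}$ legal moves, into one of the configurations $O(bw)^m$ or $(bw)^mO$.
   Context: Positions $1,\dots,2m+1$ in a row; a configuration is a word over $\{b,w,O\}$ with exactly one $O$, where $b$ denotes a black checker, $w$ a white checker and $O$ the vacancy; $(bw)^m$ denotes $bw$ repeated $m$ times. A legal move is either a slide (a checker adjacent to the vacancy moves into it) or a jump (a checker at distance two from the vacancy jumps over the checker between them into the vacancy). *)

theory Defs
  imports Main
begin

datatype cell = Bk | Wh | Vac

text \<open>A configuration is a list of cells (positions 1..2m+1 are list indices 0..2m).\<close>

definition legal_move :: "cell list \<Rightarrow> cell list \<Rightarrow> bool" where
  "legal_move c c' \<longleftrightarrow>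
     (\<exists>i j. i < length c \<and> j < length c \<and> c ! j = Vac \<and> c ! i \<noteq> Vac \<and>
        (i + 1 = j \<or> j + 1 = i \<or>
         (i + 2 = j \<and> c ! (i + 1) \<noteq> Vac) \<or> (j + 2 = i \<and> c ! (j + 1) \<noteq> Vac)) \<and>
        c' = c[j := c ! i, i := Vac])"

definition bw_pow :: "nat \<Rightarrow> cell list" where
  "bw_pow m = concat (replicate m [Bk, Wh])"

end

theory Submission
  imports Defs
begin

definition wb_pow :: "nat \<Rightarrow> cell list" where
  "wb_pow n = concat (replicate n [Wh, Bk])"

lemma bw_Suc: "bw_pow (Suc n) = Bk # Wh # bw_pow n"
  by (simp add: bw_pow_def)
lemma wb_Suc: "wb_pow (Suc n) = Wh # Bk # wb_pow n"
  by (simp add: wb_pow_def)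
lemma bw_Suc2: "bw_pow (Suc n) = bw_pow n @ [Bk, Wh]"
  by (induction n) (simp_all add: bw_pow_def)
lemma wb_Suc2: "wb_pow (Suc n) = wb_pow n @ [Wh, Bk]"
  by (induction n) (simp_all add: wb_pow_def)
lemma len_bw[simp]: "length (bw_pow n) = 2*n"
  by (induction n) (simp_all add: bw_pow_def)
lemma len_wb[simp]: "length (wb_pow n) = 2*n"
  by (induction n) (simp_all add: wb_pow_def)

lemma jumpR: "legal_move (xs @ Vac # Bk # Wh # ys) (xs @ Wh # Bk # Vac # ys)"
  unfolding legal_move_def
  apply (rule exI[where x="length xs + 2"], rule exI[where x="length xs"])
  apply (simp add: nth_append list_update_append)
  done

lemma jumpL: "legal_move (xs @ Bk # Wh # Vac # ys) (xs @ Vac # Wh # Bk # ys)"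
  unfolding legal_move_def
  apply (rule exI[where x="length xs"], rule exI[where x="length xs + 2"])
  apply (simp add: nth_append list_update_append)
  done

lemma slideL: "legal_move (xs @ Vac # Wh # ys) (xs @ Wh # Vac # ys)"
  unfolding legal_move_def
  apply (rule exI[where x="length xs + 1"], rule exI[where x="length xs"])
  apply (simp add: nth_append list_update_append)
  done

lemma slideR: "legal_move (xs @ Bk # Vac # ys) (xs @ Vac # Bk # ys)"
  unfolding legal_move_def
  apply (rule exI[where x="length xs"], rule exI[where x="length xs + 1"])
  apply (simp add: nth_append list_update_append)
  done

lemma jumpsR: "(legal_move ^^ n) (xs @ Vac # bw_pow n @ ys) (xs @ wb_pow n @ Vac # ys)"
proof (induction n arbitrary: xs)
  case 0 then show ?case by (simp add: bw_pow_def wb_pow_def)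
next
  case (Suc n)
  have "(legal_move ^^ n) ((xs @ [Wh, Bk]) @ Vac # bw_pow n @ ys) ((xs @ [Wh, Bk]) @ wb_pow n @ Vac # ys)"
    by (rule Suc.IH)
  then show ?case
    using jumpR[of xs "bw_pow n @ ys"]
    by (intro relpowp_Suc_I2[where y="xs @ Wh # Bk # Vac # bw_pow n @ ys"])
       (simp_all add: bw_Suc wb_Suc)
qed

lemma jumpsL: "(legal_move ^^ n) (xs @ bw_pow n @ Vac # ys) (xs @ Vac # wb_pow n @ ys)"
proof (induction n arbitrary: ys)
  case 0 then show ?case by (simp add: bw_pow_def wb_pow_def)
next
  case (Suc n)
  have "(legal_move ^^ n) (xs @ bw_pow n @ Vac # (Wh # Bk # ys)) (xs @ Vac # wb_pow n @ (Wh # Bk # ys))"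
    by (rule Suc.IH)
  then show ?case
    using jumpL[of "xs @ bw_pow n" ys]
    by (intro relpowp_Suc_I2[where y="xs @ bw_pow n @ Vac # Wh # Bk # ys"])
       (simp_all add: bw_Suc2 wb_Suc2)
qed

definition E :: "nat \<Rightarrow> nat \<Rightarrow> cell list" where
  "E m k = replicate (m-k) Bk @ bw_pow k @ Vac # replicate (m-k) Wh"
definition Od :: "nat \<Rightarrow> nat \<Rightarrow> cell list" where
  "Od m k = replicate (m-k) Bk @ Vac # bw_pow k @ replicate (m-k) Wh"

lemma bwb: "Bk # wb_pow k = bw_pow k @ [Bk]"
  by (induction k) (simp_all add: bw_pow_def wb_pow_def)
lemma wbw: "wb_pow k @ [Wh] = Wh # bw_pow k"
  by (induction k) (simp_all add: bw_pow_def wb_pow_def)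

lemma bw_Suc3: "bw_pow (Suc k) = Bk # wb_pow k @ [Wh]"
  by (simp add: bw_Suc wbw)

lemma E_step:
  assumes "k < m"
  shows "(legal_move ^^ Suc k) (E m k) (Od m (Suc k))"
proof -
  obtain r where r: "m - k = Suc r" "m - Suc k = r" using assms
    by (metis Suc_diff_Suc)
  have 1: "(legal_move ^^ k) (E m k) (Bk # replicate r Bk @ Vac # wb_pow k @ replicate (m-k) Wh)"
    unfolding E_def using jumpsL[of k "replicate (m-k) Bk" "replicate (m-k) Wh"]
    by (simp add: r)
  have 2: "legal_move (Bk # replicate r Bk @ Vac # wb_pow k @ replicate (m-k) Wh) (Od m (Suc k))"
    using slideR[of "replicate r Bk" "wb_pow k @ replicate (m-k) Wh"]
    unfolding Od_def by (simp add: r bw_Suc3 replicate_app_Cons_same)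
  show ?thesis using 1 2 by (rule relpowp_Suc_I)
qed

lemma Od_step:
  assumes "k < m"
  shows "(legal_move ^^ Suc k) (Od m k) (E m (Suc k))"
proof -
  obtain r where r: "m - k = Suc r" "m - Suc k = r" using assms
    by (metis Suc_diff_Suc)
  have 1: "(legal_move ^^ k) (Od m k) (replicate (m-k) Bk @ wb_pow k @ Vac # Wh # replicate r Wh)"
    unfolding Od_def using jumpsR[of k "replicate (m-k) Bk" "replicate (m-k) Wh"]
    by (simp add: r)
  have 2: "legal_move (replicate (m-k) Bk @ wb_pow k @ Vac # Wh # replicate r Wh) (E m (Suc k))"
    using slideL[of "replicate (m-k) Bk @ wb_pow k" "replicate r Wh"]
    unfolding E_def by (simp add: r bw_Suc3 replicate_app_Cons_same)
  show ?thesis using 1 2 by (rule relpowp_Suc_I)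
qed

lemma phases:
  assumes "k \<le> m"
  shows "(legal_move ^^ (k * (k + 1) div 2)) (E m 0) (if even k then E m k else Od m k)"
  using assms
proof (induction k)
  case 0 then show ?case by simp
next
  case (Suc k)
  have eq: "Suc k * (Suc k + 1) div 2 = k * (k + 1) div 2 + Suc k"
    by (induction k) auto
  have "k < m" using Suc by simp
  then have "(legal_move ^^ Suc k) (if even k then E m k else Od m k)
             (if even (Suc k) then E m (Suc k) else Od m (Suc k))"
    using E_step Od_step by auto
  moreover have "(legal_move ^^ (k * (k + 1) div 2)) (E m 0) (if even k then E m k else Od m k)"
    using Suc by simp
  ultimately show ?case unfolding eq relpowp_add by (blast intro: relcomppI)
qed

theorem lemma2:
  fixes m :: nat
  assumes "m \<ge> 1"
  shows "(legal_move ^^ (m * (m + 1) div 2))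
           (replicate m Bk @ [Vac] @ replicate m Wh) (Vac # bw_pow m)
       \<or> (legal_move ^^ (m * (m + 1) div 2))
           (replicate m Bk @ [Vac] @ replicate m Wh) (bw_pow m @ [Vac])"
proof -
  have s: "E m 0 = replicate m Bk @ [Vac] @ replicate m Wh"
    by (simp add: E_def bw_pow_def)
  have "E m m = bw_pow m @ [Vac]" "Od m m = Vac # bw_pow m"
    by (simp_all add: E_def Od_def)
  then show ?thesis using phases[of m m] s by (cases "even m") auto
qed

end
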